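(* Let $p$ be an odd prime, let $q\in\mathbb{C}_p$ with $|q-1|_p<p^{-1/(p-1)}$, let $n\ge 0$ be an integer and let $x\in\mathbb{Z}_p$. Then the limit $$K_{n,q}(x):=\int_{\mathbb{Z}_p}[x+y]_q^n\,d\mu_{-q}(y)=\lim_{N\to\infty}\frac{1}{[p^N]_{-q}}\sum_{y=0}^{p^N-1}[x+y]_q^n(-q)^y$$ exists and $$K_{n,q}(x)=[2]_q\left(\frac{1}{1-q}\right)^n\sum_{k=0}^n\binom nk(-1)^k q^{xk}\frac{1}{1+q^{k+1}}.$$ In particular, $K_{n,q}:=K_{n,q}(0)=\int_{\mathbb{Z}_p}[x]_q^n\,d\mu_{-q}(x)=[2]_q\left(\frac{1}{1-q}\right)^n\sum_{l=0}^n\binom nl(-1)^l\frac{1}{1+q^{l+1}}$.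
   Context: $\mathbb{C}_p$ is the $p$-adic completion of an algebraic closure of $\mathbb{Q}_p$, with $|p|_p=1/p$. For $q\in\mathbb{C}_p$ with $|q-1|_p<p^{-1/(p-1)}$ one sets $q^x=\exp(x\log q)$ for $|x|_p\le 1$, and $[x]_q=\frac{1-q^x}{1-q}$. For an integer $M\ge 0$, $[M]_{-q}=\frac{1-(-q)^M}{1+q}$. The ($q$-Volkenborn, "fermionic") integral with respect to $\mu_{-q}$ of a function $g$ on $\mathbb{Z}_p$ is defined by $\int_{\mathbb{Z}_p}g(y)\,d\mu_{-q}(y)=\lim_{N\to\infty}\frac{1}{[p^N]_{-q}}\sum_{y=0}^{p^N-1}g(y)(-q)^y$. *)

theory Defs
  imports "HOL-Computational_Algebra.Computational_Algebra"
begin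

text \<open>We do not construct C_p; instead we work in an arbitrary field K of characteristic 0
with an absolute value av satisfying the axioms characterizing C_p up to isometric
isomorphism: non-archimedean, restricting to the p-adic absolute value on the integers
(hence on Q), complete, algebraically closed, and with the elements algebraic over Q dense.\<close>

definition av_lim :: "('a::ab_group_add \<Rightarrow> real) \<Rightarrow> (nat \<Rightarrow> 'a) \<Rightarrow> 'a \<Rightarrow> bool" where
  "av_lim av f L \<longleftrightarrow> (\<lambda>N. av (f N - L)) \<longlonglongrightarrow> 0"

definition is_Cp :: "nat \<Rightarrow> ('a::field_char_0 \<Rightarrow> real) \<Rightarrow> bool" where
  "is_Cp p av \<longleftrightarrow>
     (\<forall>x. av x \<ge> 0) \<and> (\<forall>x. av x = 0 \<longleftrightarrow> x = 0) \<and>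
     (\<forall>x y. av (x * y) = av x * av y) \<and>
     (\<forall>x y. av (x + y) \<le> max (av x) (av y)) \<and>
     (\<forall>m::int. m \<noteq> 0 \<longrightarrow> av (of_int m) = real p powr (- real (multiplicity (int p) m))) \<and>
     (\<forall>f::nat \<Rightarrow> 'a. (\<forall>e>0. \<exists>M. \<forall>m\<ge>M. \<forall>n\<ge>M. av (f m - f n) < e) \<longrightarrow> (\<exists>L. av_lim av f L)) \<and>
     (\<forall>P::'a poly. degree P > 0 \<longrightarrow> (\<exists>z. poly P z = 0)) \<and>
     (\<forall>x. \<forall>e>0. \<exists>z. algebraic z \<and> av (x - z) < e)"

definition Zp :: "('a::field_char_0 \<Rightarrow> real) \<Rightarrow> 'a set" where
  "Zp av = {x. \<exists>s::nat \<Rightarrow> int. av_lim av (\<lambda>N. of_int (s N)) x}"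

definition av_suminf :: "('a::field_char_0 \<Rightarrow> real) \<Rightarrow> (nat \<Rightarrow> 'a) \<Rightarrow> 'a" where
  "av_suminf av f = (THE s. av_lim av (\<lambda>N. \<Sum>k<N. f k) s)"

definition p_exp :: "('a::field_char_0 \<Rightarrow> real) \<Rightarrow> 'a \<Rightarrow> 'a" where
  "p_exp av z = av_suminf av (\<lambda>k. z ^ k / of_nat (fact k))"

definition p_log :: "('a::field_char_0 \<Rightarrow> real) \<Rightarrow> 'a \<Rightarrow> 'a" where
  "p_log av q = av_suminf av (\<lambda>k. (-1) ^ k * (q - 1) ^ Suc k / of_nat (Suc k))"

definition qpow :: "('a::field_char_0 \<Rightarrow> real) \<Rightarrow> 'a \<Rightarrow> 'a \<Rightarrow> 'a" where
  "qpow av q x = p_exp av (x * p_log av q)"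

definition qint :: "('a::field_char_0 \<Rightarrow> real) \<Rightarrow> 'a \<Rightarrow> 'a \<Rightarrow> 'a" where
  "qint av q x = (1 - qpow av q x) / (1 - q)"

definition qint_neg :: "'a::field_char_0 \<Rightarrow> nat \<Rightarrow> 'a" where
  "qint_neg q M = (1 - (-q) ^ M) / (1 + q)"

definition ferm_sum :: "nat \<Rightarrow> 'a::field_char_0 \<Rightarrow> ('a \<Rightarrow> 'a) \<Rightarrow> nat \<Rightarrow> 'a" where
  "ferm_sum p q g N = (1 / qint_neg q (p ^ N)) * (\<Sum>y<p ^ N. g (of_nat y) * (-q) ^ y)"

end

theory Submission
  imports Defs
begin

locale cpx =
  fixes p :: nat and av :: "'a::field_char_0 \<Rightarrow> real"
  assumes cp: "is_Cp p av" and pr: "prime p" and od: "odd p"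
begin

lemma av_nonneg: "av x \<ge> 0" using cp unfolding is_Cp_def by blast
lemma av_eq0: "av x = 0 \<longleftrightarrow> x = 0" using cp unfolding is_Cp_def by blast
lemma av_mult: "av (x * y) = av x * av y" using cp unfolding is_Cp_def by blast
lemma av_ultra: "av (x + y) \<le> max (av x) (av y)" using cp unfolding is_Cp_def by blast
lemma av_int: "m \<noteq> 0 \<Longrightarrow> av (of_int m) = real p powr (- real (multiplicity (int p) m))"
  using cp unfolding is_Cp_def by blast
lemma av_complete: "(\<forall>e>0. \<exists>M. \<forall>m\<ge>M. \<forall>n\<ge>M. av (f m - f n) < e) \<Longrightarrow> (\<exists>L. av_lim av f L)"
  using cp unfolding is_Cp_def by blast

lemma p_gt1: "p > 1" using pr prime_gt_1_nat by blast
lemma p_ge3: "p \<ge> 3" using pr od p_gt1 by (metis One_nat_def Suc_1 Suc_leI dvd_refl le_neq_implies_less numeral_3_eq_3 odd_pos)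

lemma av_0[simp]: "av 0 = 0" using av_eq0 by simp
lemma av_1[simp]: "av 1 = 1"
  using av_int[of 1] p_gt1 by simp
lemma av_m1[simp]: "av (-1) = 1"
proof -
  have "av (-1) * av (-1) = 1" using av_mult[of "-1" "-1"] by simp
  then show ?thesis using av_nonneg[of "-1"]
    by (metis power2_eq_square power2_eq_1_iff neg_0_le_iff_le not_one_le_zero order_antisym_conv)
qed
lemma av_minus[simp]: "av (- x) = av x"
  using av_mult[of "-1" x] by simp
lemma av_sym: "av (x - y) = av (y - x)"
  by (metis av_minus minus_diff_eq)
lemma av_add: "av (x + y) \<le> av x + av y"
  using av_ultra[of x y] av_nonneg[of x] av_nonneg[of y] by linarith
lemma av_diff: "av (x - y) \<le> max (av x) (av y)"
  using av_ultra[of x "-y"] by simp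
lemma av_power: "av (x ^ n) = av x ^ n"
  by (induct n) (simp_all add: av_mult)
lemma av_inverse: "av (inverse x) = inverse (av x)"
proof (cases "x = 0")
  case False
  then have "av x * av (inverse x) = 1" using av_mult[of x "inverse x"] by simp
  moreover have "av x \<noteq> 0" using False av_eq0 by simp
  ultimately show ?thesis by (simp add: field_simps)
qed simp
lemma av_divide: "av (x / y) = av x / av y"
  by (simp add: divide_inverse av_mult av_inverse)
lemma av_pos: "x \<noteq> 0 \<Longrightarrow> av x > 0"
  using av_nonneg[of x] av_eq0[of x] by linarith

lemma av_sum_le:
  assumes "finite A" "B \<ge> 0" "\<And>i. i \<in> A \<Longrightarrow> av (f i) \<le> B"
  shows "av (sum f A) \<le> B"
  using assms
proof (induct A rule: finite_induct)
  case (insert a A)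
  then have "av (f a) \<le> B" "av (sum f A) \<le> B" by auto
  then show ?case using av_ultra[of "f a" "sum f A"] insert.hyps by (simp add: max_def split: if_splits)
qed simp

lemma av_of_nat: "n \<noteq> 0 \<Longrightarrow> av (of_nat n) = real p powr (- real (multiplicity (int p) (int n)))"
  using av_int[of "int n"] by simp

lemma av_of_nat_le1: "av (of_nat n) \<le> 1"
proof (cases "n = 0")
  case False
  have "1 \<le> real p powr real (multiplicity (int p) (int n))"
    by (rule ge_one_powr_ge_zero) (use p_gt1 in auto)
  then show ?thesis using av_of_nat[of n] False by (simp add: powr_minus inverse_le_1_iff)
qed simp

lemma av_2[simp]: "av 2 = 1"
proof -
  have "\<not> int p dvd 2"
  proof
    assume "int p dvd 2" then have "p dvd 2" by presburger
    then show False using p_ge3 using dvd_imp_le[of p 2] by linarith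
  qed
  then have "multiplicity (int p) 2 = 0" by (simp add: not_dvd_imp_multiplicity_0)
  then show ?thesis using av_int[of 2] p_gt1 by simp
qed

end

lemma lim0_le:
  fixes a b :: "nat \<Rightarrow> real"
  assumes "\<forall>\<^sub>F N in sequentially. 0 \<le> a N" "\<forall>\<^sub>F N in sequentially. a N \<le> b N" "b \<longlonglongrightarrow> 0"
  shows "a \<longlonglongrightarrow> 0"
  by (rule tendsto_sandwich[OF assms(1,2) tendsto_const assms(3)])

context cpx begin

lemma lim_def: "av_lim av f L \<longleftrightarrow> (\<lambda>N. av (f N - L)) \<longlonglongrightarrow> 0"
  by (simp add: av_lim_def)

lemma lim_const: "av_lim av (\<lambda>N. c) c"
  by (simp add: lim_def)

lemma lim_add:
  assumes "av_lim av f a" "av_lim av g b"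
  shows "av_lim av (\<lambda>N. f N + g N) (a + b)"
  unfolding lim_def
proof (rule lim0_le)
  show "\<forall>\<^sub>F N in sequentially. av (f N + g N - (a + b)) \<le> av (f N - a) + av (g N - b)"
  proof (intro always_eventually allI)
    fix N
    have "f N + g N - (a + b) = (f N - a) + (g N - b)" by simp
    then show "av (f N + g N - (a + b)) \<le> av (f N - a) + av (g N - b)" using av_add by metis
  qed
  show "(\<lambda>N. av (f N - a) + av (g N - b)) \<longlonglongrightarrow> 0"
    using assms tendsto_add[of _ 0 _ _ 0] unfolding lim_def by fastforce
qed (simp add: av_nonneg)

lemma lim_neg:
  assumes "av_lim av f a"
  shows "av_lim av (\<lambda>N. - f N) (- a)"
proof -
  have "av (- f N - - a) = av (f N - a)" for N
  proof -
    have "- f N - - a = - (f N - a)" by simp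
    then show ?thesis by (simp only: av_minus)
  qed
  then show ?thesis using assms unfolding lim_def by simp
qed

lemma lim_diff:
  assumes "av_lim av f a" "av_lim av g b"
  shows "av_lim av (\<lambda>N. f N - g N) (a - b)"
  using lim_add[OF assms(1) lim_neg[OF assms(2)]] by simp

lemma lim_mult:
  assumes "av_lim av f a" "av_lim av g b"
  shows "av_lim av (\<lambda>N. f N * g N) (a * b)"
  unfolding lim_def
proof (rule lim0_le)
  have e: "f N * g N - a * b = (f N - a) * (g N - b) + a * (g N - b) + b * (f N - a)" for N
    by (simp add: algebra_simps)
  show "\<forall>\<^sub>F N in sequentially. av (f N * g N - (a * b)) \<le>
      av (f N - a) * av (g N - b) + av a * av (g N - b) + av b * av (f N - a)"
  proof (intro always_eventually allI)
    fix N
    have h1: "av (u + v + w) \<le> av u + av v + av w" for u v w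
      using av_add[of "u+v" w] av_add[of u v] by linarith
    show "av (f N * g N - (a * b)) \<le>
      av (f N - a) * av (g N - b) + av a * av (g N - b) + av b * av (f N - a)"
      unfolding e using h1[of "(f N - a) * (g N - b)" "a * (g N - b)" "b * (f N - a)"] by (simp add: av_mult)
  qed
  have "(\<lambda>N. av (f N - a) * av (g N - b) + av a * av (g N - b) + av b * av (f N - a)) \<longlonglongrightarrow>
      0 * 0 + av a * 0 + av b * 0"
    using assms unfolding lim_def by (intro tendsto_intros) auto
  then show "(\<lambda>N. av (f N - a) * av (g N - b) + av a * av (g N - b) + av b * av (f N - a)) \<longlonglongrightarrow> 0"
    by simp
qed (simp add: av_nonneg)

lemma lim_sum:
  assumes "finite A" "\<And>i. i \<in> A \<Longrightarrow> av_lim av (f i) (a i)"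
  shows "av_lim av (\<lambda>N. \<Sum>i\<in>A. f i N) (\<Sum>i\<in>A. a i)"
  using assms
proof (induct A rule: finite_induct)
  case empty then show ?case by (simp add: lim_const)
next
  case (insert x A)
  then show ?case using lim_add[of "f x" "a x" "\<lambda>N. \<Sum>i\<in>A. f i N"] by simp
qed

lemma lim_power:
  assumes "av_lim av f a"
  shows "av_lim av (\<lambda>N. f N ^ k) (a ^ k)"
  by (induct k) (simp_all add: lim_const lim_mult[OF assms])

lemma lim_inverse:
  assumes "av_lim av f a" "a \<noteq> 0"
  shows "av_lim av (\<lambda>N. inverse (f N)) (inverse a)"
  unfolding lim_def
proof (rule lim0_le)
  have pa: "av a > 0" using assms(2) av_pos by blast
  have "\<forall>\<^sub>F N in sequentially. av (f N - a) < av a / 2"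
  proof -
    have h: "(\<lambda>N. av (f N - a)) \<longlonglongrightarrow> 0" using assms(1) unfolding lim_def .
    have "0 < av a / 2" using pa by simp
    from order_tendstoD(2)[OF h this] show ?thesis .
  qed
  then show "\<forall>\<^sub>F N in sequentially. av (inverse (f N) - inverse a) \<le> av (f N - a) * (2 / av a ^ 2)"
  proof eventually_elim
    case (elim N)
    have "av a \<le> av (a - f N) + av (f N)" using av_add[of "a - f N" "f N"] by simp
    then have fN: "av (f N) \<ge> av a / 2" using elim av_sym[of a "f N"] by linarith
    then have "f N \<noteq> 0" using pa by auto
    then have "inverse (f N) - inverse a = (a - f N) / (f N * a)" using assms(2)
      by (simp add: field_simps)
    then have "av (inverse (f N) - inverse a) = av (f N - a) / (av (f N) * av a)"
      by (simp add: av_divide av_mult av_sym)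
    also have "\<dots> \<le> av (f N - a) / (av a / 2 * av a)"
      by (rule divide_left_mono) (use fN pa av_nonneg in auto)
    also have "\<dots> = av (f N - a) * (2 / av a ^ 2)" by (simp add: power2_eq_square)
    finally show ?case .
  qed
  show "(\<lambda>N. av (f N - a) * (2 / av a ^ 2)) \<longlonglongrightarrow> 0"
    using assms(1) unfolding lim_def using tendsto_mult_left_zero by blast
qed (simp add: av_nonneg)

lemma lim_divide:
  assumes "av_lim av f a" "av_lim av g b" "b \<noteq> 0"
  shows "av_lim av (\<lambda>N. f N / g N) (a / b)"
  using lim_mult[OF assms(1) lim_inverse[OF assms(2,3)]] by (simp add: divide_inverse)

lemma lim_unique:
  assumes "av_lim av f a" "av_lim av f b"
  shows "a = b"
proof -
  have "av (a - b) \<le> 0"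
  proof (rule LIMSEQ_le[OF tendsto_const])
    show "(\<lambda>N. av (f N - a) + av (f N - b)) \<longlonglongrightarrow> 0"
      using assms unfolding lim_def using tendsto_add[of _ 0 _ _ 0] by fastforce
    show "\<exists>N. \<forall>n\<ge>N. av (a - b) \<le> av (f n - a) + av (f n - b)"
    proof (intro exI allI impI)
      fix n
      have "a - b = (f n - b) - (f n - a)" by simp
      then show "av (a - b) \<le> av (f n - a) + av (f n - b)"
        using av_add[of "f n - b" "- (f n - a)"] av_sym[of a "f n"] by simp
    qed
  qed
  then show ?thesis using av_nonneg[of "a-b"] av_eq0[of "a-b"] by simp
qed

lemma lim_eventually_eq:
  assumes "av_lim av f a" "\<forall>\<^sub>F N in sequentially. f N = g N"
  shows "av_lim av g a"
proof -
  have "\<forall>\<^sub>F N in sequentially. av (f N - a) = av (g N - a)"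
    using assms(2) by (auto elim: eventually_mono)
  then show ?thesis using assms(1) unfolding lim_def by (rule Lim_transform_eventually[rotated])
qed

end

context cpx begin

abbreviation hs :: "(nat \<Rightarrow> 'a) \<Rightarrow> 'a \<Rightarrow> bool" where
  "hs f s \<equiv> av_lim av (\<lambda>N. \<Sum>k<N. f k) s"

lemma av_tri: "av (x - z) \<le> av (x - y) + av (y - z)"
proof -
  have "x - z = (x - y) + (y - z)" by simp
  then show ?thesis using av_add[of "x - y" "y - z"] by simp
qed

lemma hs_suminf: "hs f s \<Longrightarrow> av_suminf av f = s"
  unfolding av_suminf_def using lim_unique by blast

lemma lim_Suc: "av_lim av f a \<Longrightarrow> av_lim av (\<lambda>N. f (Suc N)) a"
  unfolding lim_def by (rule LIMSEQ_Suc[where f="\<lambda>N. av (f N - a)"])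

lemma hs_terms0:
  assumes "hs f s"
  shows "(\<lambda>k. av (f k)) \<longlonglongrightarrow> 0"
proof (rule lim0_le)
  let ?S = "\<lambda>N. \<Sum>k<N. f k"
  have "av (f k) \<le> av (?S (Suc k) - s) + av (?S k - s)" for k
    using av_tri[of "?S (Suc k)" "?S k" s] av_sym[of s "?S k"] by simp
  then show "\<forall>\<^sub>F k in sequentially. av (f k) \<le> av (?S (Suc k) - s) + av (?S k - s)"
    by simp
  have "(\<lambda>k. av (?S (Suc k) - s)) \<longlonglongrightarrow> 0" using lim_Suc[OF assms] unfolding lim_def .
  moreover have "(\<lambda>k. av (?S k - s)) \<longlonglongrightarrow> 0" using assms unfolding lim_def .
  ultimately show "(\<lambda>k. av (?S (Suc k) - s) + av (?S k - s)) \<longlonglongrightarrow> 0"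
    using tendsto_add[of _ 0 _ _ 0] by fastforce
qed (simp add: av_nonneg)

lemma sum_split_ivl: fixes m n :: nat and f :: "nat \<Rightarrow> 'a" shows "n \<le> m \<Longrightarrow> (\<Sum>k<m. f k) - (\<Sum>k<n. f k) = (\<Sum>k\<in>{n..<m}. (f k :: 'a))"
  using sum_diff_nat_ivl[where m=0 and n=n and p=m and f=f] by (simp add: atLeast0LessThan)

lemma hs_conv:
  assumes "(\<lambda>k. av (f k)) \<longlonglongrightarrow> 0"
  shows "\<exists>s. hs f s"
proof (rule av_complete, intro allI impI)
  fix e :: real assume e: "e > 0"
  then have "e / 2 > 0" by simp
  from order_tendstoD(2)[OF assms this] obtain M where M: "\<And>k. k \<ge> M \<Longrightarrow> av (f k) < e / 2"
    unfolding eventually_sequentially by blast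
  have *: "av ((\<Sum>k<m. f k) - (\<Sum>k<n. f k)) < e" if "M \<le> n" "n \<le> m" for m n
  proof -
    have "av (\<Sum>k\<in>{n..<m}. f k) \<le> e / 2"
      by (rule av_sum_le) (use M that e in \<open>auto intro: less_imp_le\<close>)
    then show ?thesis using sum_split_ivl[OF that(2), of f] e by simp
  qed
  show "\<exists>M. \<forall>m\<ge>M. \<forall>n\<ge>M. av ((\<Sum>k<m. f k) - (\<Sum>k<n. f k)) < e"
  proof (intro exI allI impI)
    fix m n assume "M \<le> m" "M \<le> n"
    then show "av ((\<Sum>k<m. f k) - (\<Sum>k<n. f k)) < e"
      using *[of n m] *[of m n] av_sym by (cases "n \<le> m") auto
  qed
qed

lemma hs_bound:
  assumes "hs f s" "B \<ge> 0" "\<And>k. av (f k) \<le> B"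
  shows "av s \<le> B"
proof -
  let ?S = "\<lambda>N. \<Sum>k<N. f k"
  have "av s \<le> 0 + B"
  proof (rule LIMSEQ_le[OF tendsto_const])
    show "(\<lambda>N. av (?S N - s) + B) \<longlonglongrightarrow> 0 + B"
      using assms(1) unfolding lim_def by (intro tendsto_intros)
    show "\<exists>N. \<forall>n\<ge>N. av s \<le> av (?S n - s) + B"
    proof (intro exI allI impI)
      fix n
      have "av s \<le> av (?S n - s) + av (?S n)"
        using av_tri[of s 0 "?S n"] av_sym[of s "?S n"] by simp
      moreover have "av (?S n) \<le> B" by (rule av_sum_le) (use assms in auto)
      ultimately show "av s \<le> av (?S n - s) + B" by linarith
    qed
  qed
  then show ?thesis by simp
qed

lemma hs_cmult: "hs f s \<Longrightarrow> hs (\<lambda>k. c * f k) (c * s)"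
  using lim_mult[OF lim_const[of c], of "\<lambda>N. \<Sum>k<N. f k" s] by (simp add: sum_distrib_left)

lemma hs_shift:
  assumes "hs f s"
  shows "hs (\<lambda>k. f (Suc k)) (s - f 0)"
proof -
  have "(\<Sum>k<N. f (Suc k)) = (\<Sum>k<Suc N. f k) - f 0" for N
    by (simp only: sum.lessThan_Suc_shift) simp
  then show ?thesis using lim_diff[OF lim_Suc[OF assms] lim_const[of "f 0"]] by simp
qed

lemma hs_shiftK:
  assumes "hs f s"
  shows "hs (\<lambda>j. f (j + K)) (s - (\<Sum>k<K. f k))"
proof (induct K)
  case 0 then show ?case using assms by simp
next
  case (Suc K)
  from hs_shift[OF Suc] show ?case by (simp add: algebra_simps)
qed

lemma hs_finite:
  assumes "\<And>k. k \<ge> M \<Longrightarrow> f k = 0"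
  shows "hs f (\<Sum>k<M. f k)"
proof (rule lim_eventually_eq[OF lim_const])
  show "\<forall>\<^sub>F N in sequentially. (\<Sum>k<M. f k) = (\<Sum>k<N. f k)"
    unfolding eventually_sequentially
  proof (intro exI allI impI)
    fix N assume "M \<le> N"
    then show "(\<Sum>k<M. f k) = (\<Sum>k<N. f k)"
      using sum_split_ivl[of M N f] assms by simp
  qed
qed

end

context cpx begin

lemma av_bounded:
  assumes "(\<lambda>k. av (f k)) \<longlonglongrightarrow> 0"
  obtains M where "M > 0" "\<And>k. av (f k) \<le> M"
proof -
  have "Bseq (\<lambda>k. av (f k))" using convergent_imp_Bseq[OF convergentI[OF assms]] .
  then obtain M where "M > 0" "\<And>k. norm (av (f k)) \<le> M" by (rule BseqE) blast
  then show ?thesis by (intro that[of M]) (auto intro: order_trans[OF abs_ge_self])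
qed

lemma hs_cauchy:
  assumes A: "hs a A" and B: "hs b B"
  shows "hs (\<lambda>m. \<Sum>i\<le>m. a i * b (m - i)) (A * B)"
proof -
  let ?SA = "\<lambda>N. \<Sum>k<N. a k" and ?SB = "\<lambda>N. \<Sum>k<N. b k"
  define D where "D N = (\<Sum>(i,j)\<in>({..<N}\<times>{..<N}) - {(i,j). i+j<N}. a i * b j)" for N
  have CN: "(\<Sum>m<N. \<Sum>i\<le>m. a i * b (m - i)) = ?SA N * ?SB N - D N" for N
  proof -
    have sub: "{(i,j). i+j<N} \<subseteq> {..<N}\<times>{..<N}" by auto
    have "?SA N * ?SB N = (\<Sum>(i,j)\<in>{..<N}\<times>{..<N}. a i * b j)"
      by (simp add: sum_product sum.cartesian_product)
    also have "\<dots> = D N + (\<Sum>(i,j)\<in>{(i,j). i+j<N}. a i * b j)"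
      unfolding D_def by (rule sum.subset_diff[OF sub]) auto
    also have "(\<Sum>(i,j)\<in>{(i,j). i+j<N}. a i * b j) = (\<Sum>m<N. \<Sum>i\<le>m. a i * b (m - i))"
      by (rule sum.triangle_reindex)
    finally show ?thesis by simp
  qed
  have D0: "(\<lambda>N. av (D N)) \<longlonglongrightarrow> 0"
  proof (rule LIMSEQ_I)
    fix r :: real assume r: "r > 0"
    obtain Ma where Ma: "Ma > 0" "\<And>k. av (a k) \<le> Ma" using av_bounded[OF hs_terms0[OF A]] by blast
    obtain Mb where Mb: "Mb > 0" "\<And>k. av (b k) \<le> Mb" using av_bounded[OF hs_terms0[OF B]] by blast
    have "r/(2*Mb) > 0" using r Mb by simp
    from order_tendstoD(2)[OF hs_terms0[OF A] this] obtain K1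
      where K1: "\<And>k. k \<ge> K1 \<Longrightarrow> av (a k) < r/(2*Mb)" unfolding eventually_sequentially by blast
    have "r/(2*Ma) > 0" using r Ma by simp
    from order_tendstoD(2)[OF hs_terms0[OF B] this] obtain K2
      where K2: "\<And>k. k \<ge> K2 \<Longrightarrow> av (b k) < r/(2*Ma)" unfolding eventually_sequentially by blast
    show "\<exists>no. \<forall>n\<ge>no. norm (av (D n) - 0) < r"
    proof (intro exI allI impI)
      fix n assume n: "2*(K1+K2) \<le> n"
      have "av (D n) \<le> r/2" unfolding D_def
      proof (rule av_sum_le)
        fix x assume x: "x \<in> {..<n}\<times>{..<n} - {(i,j). i+j<n}"
        obtain i j where ij: "x = (i,j)" by (cases x)
        with x have "i + j \<ge> n" by auto
        then have "i \<ge> K1 \<or> j \<ge> K2" using n by arith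
        then have "av (a i) * av (b j) \<le> r/2"
        proof
          assume "i \<ge> K1"
          then have "av (a i) * av (b j) \<le> r/(2*Mb) * Mb"
            by (intro mult_mono) (use K1 Mb(2) av_nonneg r Mb(1) in \<open>auto intro: less_imp_le\<close>)
          then show ?thesis using Mb by simp
        next
          assume "j \<ge> K2"
          then have "av (a i) * av (b j) \<le> Ma * (r/(2*Ma))"
            by (intro mult_mono) (use K2 Ma(2) av_nonneg r Ma(1) in \<open>auto intro: less_imp_le\<close>)
          then show ?thesis using Ma by simp
        qed
        then show "av (case x of (i,j) \<Rightarrow> a i * b j) \<le> r/2" using ij by (simp add: av_mult)
      qed (use r in auto)
      then show "norm (av (D n) - 0) < r" using r av_nonneg[of "D n"] by simp
    qed
  qed
  then have D0': "av_lim av D 0" unfolding lim_def by simp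
  show ?thesis
    using lim_diff[OF lim_mult[OF A B] D0'] CN by simp
qed

lemma hs_rearr:
  fixes c :: "nat \<Rightarrow> nat \<Rightarrow> 'a" and \<rho> :: real
  assumes R: "\<And>k. hs (\<lambda>m. c k m) (R k)"
    and bd: "\<And>k m. av (c k m) \<le> \<rho> ^ m" and \<rho>: "0 \<le> \<rho>" "\<rho> < 1"
    and tri: "\<And>k m. m < k \<Longrightarrow> c k m = 0"
    and S: "hs (\<lambda>m. \<Sum>k\<le>m. c k m) S"
  shows "hs R S"
proof -
  define E where "E K = (\<Sum>k<K. R k - (\<Sum>m<K. c k m))" for K
  have split: "(\<Sum>k<K. R k) = (\<Sum>m<K. \<Sum>k\<le>m. c k m) + E K" for K
  proof -
    have "(\<Sum>m<K. \<Sum>k\<le>m. c k m) = (\<Sum>m<K. \<Sum>k<K. c k m)"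
    proof (rule sum.cong[OF refl])
      fix m assume "m \<in> {..<K}"
      then show "(\<Sum>k\<le>m. c k m) = (\<Sum>k<K. c k m)"
        by (intro sum.mono_neutral_left) (auto simp: tri)
    qed
    also have "\<dots> = (\<Sum>k<K. \<Sum>m<K. c k m)" by (rule sum.swap)
    finally show ?thesis unfolding E_def by (simp add: sum_subtractf)
  qed
  have E0: "av_lim av E 0" unfolding lim_def
  proof (rule lim0_le)
    show "\<forall>\<^sub>F K in sequentially. av (E K - 0) \<le> \<rho> ^ K"
    proof (intro always_eventually allI)
      fix K
      have "av (E K) \<le> \<rho> ^ K" unfolding E_def
      proof (rule av_sum_le)
        fix k
        show "av (R k - (\<Sum>m<K. c k m)) \<le> \<rho> ^ K"
        proof (rule hs_bound[OF hs_shiftK[OF R]])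
          fix j show "av (c k (j + K)) \<le> \<rho> ^ K"
            using bd[of k "j+K"] power_decreasing[of K "j+K" \<rho>] \<rho> by simp
        qed (use \<rho> in simp)
      qed (use \<rho> in simp_all)
      then show "av (E K - 0) \<le> \<rho> ^ K" by simp
    qed
    show "(\<lambda>K. \<rho> ^ K) \<longlonglongrightarrow> 0" using \<rho> by (simp add: LIMSEQ_realpow_zero)
  qed (simp add: av_nonneg)
  show ?thesis using lim_add[OF S E0] split by simp
qed

end

lemma bern_nat: "(p::nat) \<ge> 1 \<Longrightarrow> 1 + v * (p - 1) \<le> p ^ v"
proof (induct v)
  case (Suc v)
  have "1 + Suc v * (p - 1) = (1 + v * (p - 1)) + (p - 1)" by simp
  also have "\<dots> \<le> p ^ v + (p - 1)" using Suc by simp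
  also have "\<dots> \<le> p ^ v + (p - 1) * p ^ v"
  proof -
    have "1 \<le> p ^ v" using Suc.prems by simp
    then have "(p - 1) * 1 \<le> (p - 1) * p ^ v" by (rule mult_le_mono2)
    then show ?thesis by simp
  qed
  also have "\<dots> = p ^ Suc v" using Suc.prems by (simp add: algebra_simps)
  finally show ?case .
qed simp

definition spw :: "nat \<Rightarrow> real" where "spw p = real p powr (1 / (real p - 1))"

context cpx begin

abbreviation vv :: "nat \<Rightarrow> nat" where "vv n \<equiv> multiplicity (int p) (int n)"

lemma prP: "prime (int p)" using pr by simp

lemma vv_mult: "a \<noteq> 0 \<Longrightarrow> b \<noteq> 0 \<Longrightarrow> vv (a * b) = vv a + vv b"
  using prime_elem_multiplicity_mult_distrib[of "int p" "int a" "int b"] prP by simp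

lemma vv_p_mult: "m \<noteq> 0 \<Longrightarrow> vv (p * m) = Suc (vv m)"
  using multiplicity_times_same[where p="int p" and x="int m"] p_gt1 by auto

lemma vv_ndvd: "\<not> p dvd n \<Longrightarrow> vv n = 0"
  by (rule not_dvd_imp_multiplicity_0) simp

lemma vv_fact: "vv (fact k) = k div p + vv (fact (k div p))"
proof (induct k)
  case 0 then show ?case by simp
next
  case (Suc k)
  have "fact (Suc k) = Suc k * (fact k :: nat)" by simp
  then have "vv (fact (Suc k)) = vv (Suc k) + vv (fact k)"
    using vv_mult[of "Suc k" "fact k"] by simp
  show ?case
  proof (cases "p dvd Suc k")
    case False
    then have "Suc k div p = k div p" by (simp add: div_Suc dvd_eq_mod_eq_0)
    then show ?thesis using Suc vv_ndvd[OF False] \<open>vv (fact (Suc k)) = _\<close> by simp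
  next
    case True
    then obtain m where m: "Suc k = p * m" by blast
    then have m0: "m \<ge> 1" by (cases m) auto
    have dm: "Suc k div p = m" using m p_gt1 by simp
    have dk: "k div p = m - 1"
      using div_Suc[of k p] True dm by (simp add: dvd_eq_mod_eq_0)
    have fm: "vv (fact m) = vv m + vv (fact (m - 1))"
    proof -
      obtain m' where m': "m = Suc m'" using m0 by (cases m) auto
      have "fact m = m * (fact (m - 1) :: nat)" using m' by simp
      then show ?thesis using vv_mult[of m "fact (m - 1)"] m' by simp
    qed
    have "vv (fact (Suc k)) = Suc (vv m) + (m - 1 + vv (fact (m - 1)))"
      using \<open>vv (fact (Suc k)) = _\<close> Suc dk m vv_p_mult[of m] m0 by simp
    then show ?thesis using dm fm m0 by simp
  qed
qed

lemma vv_fact_le: "vv (fact k) * (p - 1) \<le> k"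
proof (induct k rule: less_induct)
  case (less k)
  show ?case
  proof (cases "k = 0")
    case True then show ?thesis by simp
  next
    case False
    let ?m = "k div p"
    have "?m < k" using False p_gt1 by simp
    then have IH: "vv (fact ?m) * (p - 1) \<le> ?m" using less by blast
    have "vv (fact k) * (p - 1) = ?m * (p - 1) + vv (fact ?m) * (p - 1)"
      using vv_fact[of k] by (simp add: algebra_simps)
    also have "\<dots> \<le> ?m * (p - 1) + ?m" using IH by simp
    also have "\<dots> = ?m * p" using p_gt1 by (cases p) (auto simp: algebra_simps)
    also have "\<dots> \<le> k" by (simp add: div_times_less_eq_dividend)
    finally show ?thesis .
  qed
qed

lemma vv_le: "n \<noteq> 0 \<Longrightarrow> vv n * (p - 1) \<le> n - 1"
proof -
  assume n: "n \<noteq> 0"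
  have "(int p) ^ (vv n) dvd int n" by (rule multiplicity_dvd)
  then have "p ^ (vv n) dvd n" by (metis of_nat_power of_nat_dvd_iff)
  then have "p ^ (vv n) \<le> n" using n by (simp add: dvd_imp_le)
  moreover have "1 + vv n * (p - 1) \<le> p ^ (vv n)" using bern_nat p_gt1 by simp
  ultimately show ?thesis by linarith
qed

abbreviation sp :: real where "sp \<equiv> spw p"

lemma sp_gt1: "sp > 1"
proof -
  have "real p powr 0 < real p powr (1 / (real p - 1))" by (rule powr_less_mono) (use p_gt1 in auto)
  then show ?thesis using p_gt1 by (simp add: spw_def)
qed

lemma pw_le: "real v * (real p - 1) \<le> real k \<Longrightarrow> real p powr real v \<le> sp ^ k"
proof -
  assume h: "real v * (real p - 1) \<le> real k"
  have p1: "real p - 1 > 0" using p_gt1 by simp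
  have "real v \<le> real k * (1 / (real p - 1))" using h p1 by (simp add: field_simps)
  then have "real p powr real v \<le> real p powr (real k * (1 / (real p - 1)))"
    by (rule powr_mono) (use p_gt1 in simp)
  also have "\<dots> = sp ^ k" using powr_power[of "real p" "1 / (real p - 1)" k] p_gt1 by (simp add: spw_def)
  finally show ?thesis .
qed

lemma av_inv: "av (1 / x) = 1 / av x" by (simp add: av_divide)

lemma av_inv_of_nat: "n \<noteq> 0 \<Longrightarrow> av (1 / of_nat n) = real p powr real (vv n)"
  by (simp add: av_inv av_of_nat powr_minus_divide)

lemma av_inv_nat_le: "n \<noteq> 0 \<Longrightarrow> av (1 / of_nat n) \<le> sp ^ (n - 1)"
proof -
  assume n: "n \<noteq> 0"
  have "vv n * (p - 1) \<le> n - 1" using vv_le[OF n] .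
  then have "real (vv n) * (real p - 1) \<le> real (n - 1)" using p_gt1
    by (metis of_nat_1 of_nat_diff of_nat_le_iff of_nat_mult less_imp_le)
  then show ?thesis using av_inv_of_nat[OF n] pw_le by simp
qed

lemma av_fact_le: "av (1 / of_nat (fact k)) \<le> sp ^ k"
proof -
  have "real (vv (fact k)) * (real p - 1) \<le> real k" using vv_fact_le[of k] p_gt1
    by (metis of_nat_1 of_nat_diff of_nat_le_iff of_nat_mult less_imp_le)
  then show ?thesis using av_inv_of_nat[of "fact k"] pw_le by simp
qed

lemma av_of_p: "av (of_nat p) = 1 / real p"
proof -
  have "vv p = 1" using multiplicity_self[of "int p"] p_gt1 prP by simp
  then show ?thesis using av_of_nat[of p] p_gt1 by (simp add: powr_minus_divide)
qed

end

context cpx begin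

lemma p_exp_alt: "p_exp av z = av_suminf av (\<lambda>k. z ^ k / fact k)"
  by (simp add: p_exp_def)

lemma av_fact_le': "av (1 / fact k) \<le> sp ^ k"
  using av_fact_le[of k] by simp

lemma exp_term_bound: "av (z ^ k / fact k) \<le> (av z * sp) ^ k"
proof -
  have "z ^ k / fact k = z ^ k * (1 / fact k)" by simp
  then have "av (z ^ k / fact k) = av z ^ k * av (1 / fact k)" by (simp only: av_mult av_power)
  also have "\<dots> \<le> av z ^ k * sp ^ k"
    by (rule mult_left_mono[OF av_fact_le']) (simp add: av_nonneg)
  finally show ?thesis by (simp add: power_mult_distrib)
qed

lemma exp_hs:
  assumes "av z * sp < 1"
  shows "hs (\<lambda>k. z ^ k / fact k) (p_exp av z)"
proof -
  have "(\<lambda>k. av (z ^ k / fact k)) \<longlonglongrightarrow> 0"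
  proof (rule lim0_le)
    show "(\<lambda>k. (av z * sp) ^ k) \<longlonglongrightarrow> 0"
      using assms av_nonneg[of z] sp_gt1 by (intro LIMSEQ_realpow_zero) auto
  qed (auto simp: av_nonneg exp_term_bound)
  then have "\<exists>s. hs (\<lambda>k. z ^ k / fact k) s" by (rule hs_conv)
  then obtain s where s: "hs (\<lambda>k. z ^ k / fact k) s" by blast
  then have "p_exp av z = s" unfolding p_exp_alt by (rule hs_suminf)
  then show ?thesis using s by simp
qed

lemma exp_add:
  assumes a: "av a * sp < 1" and b: "av b * sp < 1"
  shows "p_exp av (a + b) = p_exp av a * p_exp av b"
proof -
  have ab: "av (a + b) * sp < 1"
  proof -
    have "av (a + b) * sp \<le> max (av a) (av b) * sp"
      using av_ultra[of a b] sp_gt1 by (intro mult_right_mono) auto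
    then show ?thesis using a b by (simp add: max_def split: if_splits)
  qed
  have eq: "(\<Sum>i\<le>m. a ^ i / fact i * (b ^ (m - i) / fact (m - i))) = (a + b) ^ m / fact m" for m
  proof -
    have "(a + b) ^ m / fact m = (\<Sum>i\<le>m. of_nat (m choose i) * a ^ i * b ^ (m - i)) / fact m"
      by (simp add: binomial_ring)
    also have "\<dots> = (\<Sum>i\<le>m. of_nat (m choose i) * a ^ i * b ^ (m - i) / fact m)"
      by (simp add: sum_divide_distrib)
    also have "\<dots> = (\<Sum>i\<le>m. a ^ i / fact i * (b ^ (m - i) / fact (m - i)))"
    proof (rule sum.cong[OF refl])
      fix i assume "i \<in> {..m}"
      then have "i \<le> m" by simp
      then show "of_nat (m choose i) * a ^ i * b ^ (m - i) / fact m = a ^ i / fact i * (b ^ (m - i) / fact (m - i))"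
        by (simp add: binomial_fact field_simps)
    qed
    finally show ?thesis by simp
  qed
  have "hs (\<lambda>m. \<Sum>i\<le>m. a ^ i / fact i * (b ^ (m - i) / fact (m - i))) (p_exp av a * p_exp av b)"
    by (rule hs_cauchy[OF exp_hs[OF a] exp_hs[OF b]])
  then have "hs (\<lambda>m. (a + b) ^ m / fact m) (p_exp av a * p_exp av b)" unfolding eq .
  then show ?thesis using exp_hs[OF ab] lim_unique by blast
qed

lemma exp_0: "p_exp av 0 = 1"
proof -
  have "hs (\<lambda>k. (0::'a) ^ k / fact k) (\<Sum>k<1. (0::'a) ^ k / fact k)"
    by (rule hs_finite) simp
  then have "hs (\<lambda>k. (0::'a) ^ k / fact k) 1" by simp
  moreover have "hs (\<lambda>k. (0::'a) ^ k / fact k) (p_exp av 0)" by (rule exp_hs) simp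
  ultimately show ?thesis using lim_unique by blast
qed

lemma exp_nat_mult:
  assumes "av z * sp < 1"
  shows "p_exp av (of_nat k * z) = p_exp av z ^ k"
proof (induct k)
  case 0 then show ?case by (simp add: exp_0)
next
  case (Suc k)
  have "av (of_nat k) * av z \<le> av z"
    by (rule mult_left_le_one_le) (simp_all add: av_nonneg av_of_nat_le1)
  then have "av (of_nat k * z) * sp \<le> av z * sp"
    using sp_gt1 by (intro mult_right_mono) (auto simp: av_mult)
  then have k: "av (of_nat k * z) * sp < 1" using assms by linarith
  have "p_exp av (of_nat (Suc k) * z) = p_exp av (z + of_nat k * z)" by (simp add: algebra_simps)
  also have "\<dots> = p_exp av z * p_exp av (of_nat k * z)" by (rule exp_add[OF assms k])
  finally show ?case using Suc by simp
qed

lemma exp_sub1_bound: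
  assumes "av z * sp < 1"
  shows "av (p_exp av z - 1) \<le> av z * sp"
proof -
  have "hs (\<lambda>k. z ^ Suc k / fact (Suc k)) (p_exp av z - z ^ 0 / fact 0)"
    using hs_shift[OF exp_hs[OF assms]] .
  then have h: "hs (\<lambda>k. z ^ Suc k / fact (Suc k)) (p_exp av z - 1)" by simp
  show ?thesis
  proof (rule hs_bound[OF h])
    fix k
    have "av (z ^ Suc k / fact (Suc k)) \<le> (av z * sp) ^ Suc k" by (rule exp_term_bound)
    also have "\<dots> = (av z * sp) * (av z * sp) ^ k" by simp
    also have "\<dots> \<le> (av z * sp) * 1"
      using assms av_nonneg[of z] sp_gt1
      by (intro mult_left_mono power_le_one) auto
    finally show "av (z ^ Suc k / fact (Suc k)) \<le> av z * sp" by simp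
  qed (use av_nonneg[of z] sp_gt1 in simp)
qed

end

locale cpq = cpx +
  fixes q :: 'a
  assumes qsmall: "av (q - 1) * sp < 1"
begin

abbreviation rho :: real where "rho \<equiv> av (q - 1) * sp"
abbreviation Lg :: 'a where "Lg \<equiv> p_log av q"
abbreviation ell :: "'a fps" where "ell \<equiv> fps_ln 1"

lemma rho_nonneg: "rho \<ge> 0" using av_nonneg sp_gt1 by simp

lemma ell_nth: "ell $ m = (if m = 0 then 0 else (-1) ^ (m - 1) / of_nat m)"
  by (simp add: fps_ln_nth)

lemma ln_term_bound: "av (ell $ m * (q - 1) ^ m) \<le> (1 / sp) * rho ^ m"
proof (cases "m = 0")
  case True then show ?thesis using sp_gt1 by (simp add: ell_nth)
next
  case False
  have "av (ell $ m) = av (1 / of_nat m)"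
    using False by (simp add: ell_nth av_divide av_power)
  also have "\<dots> \<le> sp ^ (m - 1)" by (rule av_inv_nat_le[OF False])
  finally have e: "av (ell $ m) \<le> sp ^ (m - 1)" .
  have "av (ell $ m * (q - 1) ^ m) = av (ell $ m) * av (q - 1) ^ m" by (simp add: av_mult av_power)
  also have "\<dots> \<le> sp ^ (m - 1) * av (q - 1) ^ m"
    by (rule mult_right_mono[OF e]) (simp add: av_nonneg)
  also have "\<dots> = (1 / sp) * rho ^ m"
  proof -
    have "sp ^ m = sp * sp ^ (m - 1)" using False by (metis Suc_diff_1 neq0_conv power_Suc)
    then show ?thesis using sp_gt1 by (simp add: power_mult_distrib field_simps)
  qed
  finally show ?thesis .
qed

lemma ln_hs: "hs (\<lambda>m. ell $ m * (q - 1) ^ m) Lg"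
proof -
  have "(\<lambda>m. av (ell $ m * (q - 1) ^ m)) \<longlonglongrightarrow> 0"
  proof (rule lim0_le)
    show "(\<lambda>m. (1 / sp) * rho ^ m) \<longlonglongrightarrow> 0"
      using qsmall rho_nonneg by (intro tendsto_mult_right_zero LIMSEQ_realpow_zero) auto
  qed (use ln_term_bound in \<open>auto simp: av_nonneg\<close>)
  then have "\<exists>s. hs (\<lambda>m. ell $ m * (q - 1) ^ m) s" by (rule hs_conv)
  then obtain S where S: "hs (\<lambda>m. ell $ m * (q - 1) ^ m) S" by blast
  have eqn: "(\<lambda>k. ell $ Suc k * (q - 1) ^ Suc k) = (\<lambda>k. (-1) ^ k * (q - 1) ^ Suc k / of_nat (Suc k))"
    by (rule ext) (simp add: ell_nth del: of_nat_Suc)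
  have "hs (\<lambda>k. (-1) ^ k * (q - 1) ^ Suc k / of_nat (Suc k)) (S - ell $ 0 * (q - 1) ^ 0)"
    using hs_shift[OF S] unfolding eqn .
  then have "hs (\<lambda>k. (-1) ^ k * (q - 1) ^ Suc k / of_nat (Suc k)) S" by simp
  then have "Lg = S" unfolding p_log_def by (rule hs_suminf)
  then show ?thesis using S by simp
qed

lemma Lg_bound: "av Lg * sp \<le> rho"
proof -
  have "av Lg \<le> (1 / sp) * rho"
  proof (rule hs_bound[OF ln_hs])
    fix m
    show "av (ell $ m * (q - 1) ^ m) \<le> (1 / sp) * rho"
    proof (cases "m = 0")
      case True then show ?thesis using rho_nonneg sp_gt1 by (simp add: ell_nth av_nonneg)
    next
      case False
      have "rho ^ m \<le> rho ^ 1" using False qsmall rho_nonneg by (intro power_decreasing) auto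
      then have "(1 / sp) * rho ^ m \<le> (1 / sp) * rho" using sp_gt1 by (intro mult_left_mono) auto
      then show ?thesis using ln_term_bound[of m] by linarith
    qed
  qed (use rho_nonneg sp_gt1 in \<open>simp add: av_nonneg\<close>)
  then show ?thesis using sp_gt1 by (simp add: field_simps)
qed

lemma Lg_small: "av Lg * sp < 1" using Lg_bound qsmall by linarith

end

context cpq begin

lemma pow_hs:
  "hs (\<lambda>m. (ell ^ k) $ m * (q - 1) ^ m) (Lg ^ k) \<and>
   (\<forall>m. av ((ell ^ k) $ m * (q - 1) ^ m) \<le> (1 / sp) ^ k * rho ^ m)"
proof (induct k)
  case 0
  have "hs (\<lambda>m. (ell ^ 0) $ m * (q - 1) ^ m) (\<Sum>m<1. (ell ^ 0) $ m * (q - 1) ^ m)"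
    by (rule hs_finite) simp
  then have "hs (\<lambda>m. (ell ^ 0) $ m * (q - 1) ^ m) (Lg ^ 0)" by simp
  moreover have "av ((ell ^ 0) $ m * (q - 1) ^ m) \<le> (1 / sp) ^ 0 * rho ^ m" for m
    using rho_nonneg by simp
  ultimately show ?case by blast
next
  case (Suc k)
  let ?a = "\<lambda>m. ell $ m * (q - 1) ^ m" and ?b = "\<lambda>m. (ell ^ k) $ m * (q - 1) ^ m"
  have eq: "(ell ^ Suc k) $ m * (q - 1) ^ m = (\<Sum>i\<le>m. ?a i * ?b (m - i))" for m
  proof -
    have "(ell ^ Suc k) $ m * (q - 1) ^ m = (\<Sum>i\<le>m. ell $ i * (ell ^ k) $ (m - i)) * (q - 1) ^ m"
      by (simp add: fps_mult_nth atLeast0AtMost)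
    also have "\<dots> = (\<Sum>i\<le>m. ell $ i * (ell ^ k) $ (m - i) * (q - 1) ^ m)"
      by (simp add: sum_distrib_right)
    also have "\<dots> = (\<Sum>i\<le>m. ?a i * ?b (m - i))"
    proof (rule sum.cong[OF refl])
      fix i assume "i \<in> {..m}"
      then have "(q - 1) ^ m = (q - 1) ^ i * (q - 1) ^ (m - i)" by (simp flip: power_add)
      then show "ell $ i * (ell ^ k) $ (m - i) * (q - 1) ^ m = ?a i * ?b (m - i)"
        by (simp add: algebra_simps)
    qed
    finally show ?thesis .
  qed
  have "hs (\<lambda>m. \<Sum>i\<le>m. ?a i * ?b (m - i)) (Lg * Lg ^ k)"
    by (rule hs_cauchy[OF ln_hs]) (use Suc in blast)
  then have h: "hs (\<lambda>m. (ell ^ Suc k) $ m * (q - 1) ^ m) (Lg ^ Suc k)" unfolding eq by simp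
  have "av ((ell ^ Suc k) $ m * (q - 1) ^ m) \<le> (1 / sp) ^ Suc k * rho ^ m" for m
    unfolding eq
  proof (rule av_sum_le)
    fix i assume "i \<in> {..m}"
    then have im: "i \<le> m" by simp
    have "av (?a i * ?b (m - i)) = av (?a i) * av (?b (m - i))" by (rule av_mult)
    also have "\<dots> \<le> ((1 / sp) * rho ^ i) * ((1 / sp) ^ k * rho ^ (m - i))"
      using ln_term_bound[of i] Suc rho_nonneg sp_gt1
      by (intro mult_mono) (auto simp: av_nonneg)
    also have "\<dots> = (1 / sp) ^ Suc k * rho ^ m"
      using im by (simp add: algebra_simps flip: power_add)
    finally show "av (?a i * ?b (m - i)) \<le> (1 / sp) ^ Suc k * rho ^ m" .
  qed (use rho_nonneg sp_gt1 in simp_all)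
  then show ?case using h by blast
qed

lemma compose_id: "fps_exp 1 oo ell = fps_X + 1"
proof -
  have l: "ell = fps_inv (fps_exp 1 - 1)" by (rule fps_ln_fps_exp_inv) simp
  have "(fps_exp (1::'a) - 1) oo fps_inv (fps_exp 1 - 1) = fps_X"
    by (rule fps_inv_right) simp_all
  then have "(fps_exp 1 oo ell) - (1 oo ell) = fps_X"
    unfolding l by (simp add: fps_compose_sub_distrib)
  then show ?thesis by (simp add: algebra_simps)
qed

lemma exp_log: "p_exp av Lg = q"
proof -
  define c where "c k m = 1 / fact k * ((ell ^ k) $ m * (q - 1) ^ m)" for k m
  have R: "hs (\<lambda>m. c k m) (1 / fact k * Lg ^ k)" for k
    unfolding c_def using pow_hs[of k] hs_cmult by blast
  have bd: "av (c k m) \<le> rho ^ m" for k m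
  proof -
    have "av (c k m) = av (1 / fact k) * av ((ell ^ k) $ m * (q - 1) ^ m)"
      unfolding c_def by (rule av_mult)
    also have "\<dots> \<le> sp ^ k * ((1 / sp) ^ k * rho ^ m)"
      using av_fact_le'[of k] pow_hs[of k] sp_gt1 by (intro mult_mono) (auto simp: av_nonneg)
    also have "\<dots> = rho ^ m" using sp_gt1 by (simp add: power_one_over field_simps)
    finally show ?thesis .
  qed
  have tri: "c k m = 0" if "m < k" for k m
    using startsby_zero_power_prefix[of ell k] that unfolding c_def by simp
  have S: "hs (\<lambda>m. \<Sum>k\<le>m. c k m) q"
  proof -
    have e: "(\<Sum>k\<le>m. c k m) = (fps_X + 1) $ m * (q - 1) ^ m" for m
    proof -
      have "(\<Sum>k\<le>m. c k m) = (\<Sum>k\<le>m. fps_exp 1 $ k * (ell ^ k) $ m) * (q - 1) ^ m"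
        unfolding c_def by (simp add: sum_distrib_right mult.assoc)
      also have "\<dots> = (fps_exp 1 oo ell) $ m * (q - 1) ^ m"
        by (simp add: fps_compose_nth atLeast0AtMost)
      finally show ?thesis by (simp add: compose_id)
    qed
    have "hs (\<lambda>m. (fps_X + 1) $ m * (q - 1) ^ m) (\<Sum>m<2. (fps_X + 1) $ m * (q - 1) ^ m)"
      by (rule hs_finite) simp
    then show ?thesis unfolding e by (simp add: numeral_2_eq_2)
  qed
  have "hs (\<lambda>k. 1 / fact k * Lg ^ k) q"
    by (rule hs_rearr[OF R bd rho_nonneg qsmall tri S])
  then have "hs (\<lambda>k. Lg ^ k / fact k) q" by simp
  then show ?thesis using exp_hs[OF Lg_small] lim_unique by blast
qed

end

context cpx begin

lemma av_of_int_le1: "av (of_int m) \<le> 1"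
proof (cases "m = 0")
  case False
  have "1 \<le> real p powr real (multiplicity (int p) m)"
    by (rule ge_one_powr_ge_zero) (use p_gt1 in auto)
  then show ?thesis using av_int[OF False] by (simp add: powr_minus inverse_le_1_iff)
qed simp

lemma Zp_bound:
  assumes "x \<in> Zp av"
  shows "av x \<le> 1"
proof -
  obtain s :: "nat \<Rightarrow> int" where s: "av_lim av (\<lambda>N. of_int (s N)) x"
    using assms unfolding Zp_def by blast
  have "av x \<le> 0 + 1"
  proof (rule LIMSEQ_le[OF tendsto_const])
    show "(\<lambda>N. av (of_int (s N) - x) + 1) \<longlonglongrightarrow> 0 + 1"
      using s unfolding lim_def by (intro tendsto_intros)
    show "\<exists>N. \<forall>n\<ge>N. av x \<le> av (of_int (s n) - x) + 1"
    proof (intro exI allI impI)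
      fix n
      have "av x \<le> av (x - of_int (s n)) + av (of_int (s n) - 0)" using av_tri[of x 0 "of_int (s n)"] by simp
      then show "av x \<le> av (of_int (s n) - x) + 1"
        using av_of_int_le1[of "s n"] av_sym[of x "of_int (s n)"] by simp
    qed
  qed
  then show ?thesis by simp
qed

lemma zero_Zp: "0 \<in> Zp av"
  unfolding Zp_def using lim_const[of 0] by (intro CollectI exI[of _ "\<lambda>N. 0"]) simp

end

context cpq begin

lemma qpow_nat: "qpow av q (of_nat y) = q ^ y"
  unfolding qpow_def using exp_nat_mult[OF Lg_small, of y] exp_log by simp

lemma small_mult:
  assumes "av z \<le> 1"
  shows "av (z * Lg) * sp < 1"
proof -
  have "av z * av Lg \<le> av Lg" by (rule mult_left_le_one_le) (use assms in \<open>simp_all add: av_nonneg\<close>)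
  then have "av (z * Lg) * sp \<le> av Lg * sp" using sp_gt1 by (intro mult_right_mono) (auto simp: av_mult)
  then show ?thesis using Lg_small by linarith
qed

lemma pow_near1: "av (q ^ j - 1) < 1"
proof -
  have "q ^ j = p_exp av (of_nat j * Lg)" using exp_nat_mult[OF Lg_small, of j] exp_log by simp
  moreover have "av (of_nat j * Lg) * sp < 1"
    using small_mult[of "of_nat j"] av_of_nat_le1 by (simp add: mult.commute)
  ultimately show ?thesis using exp_sub1_bound[of "of_nat j * Lg"] by simp
qed

lemma pow_ne_m1: "q ^ j \<noteq> -1"
proof
  assume "q ^ j = -1"
  then have "av (q ^ j - 1) = av (-2)" by simp
  then show False using pow_near1[of j] by simp
qed

lemma QN_lim: "av_lim av (\<lambda>N. q ^ (p ^ N)) 1"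
  unfolding lim_def
proof (rule lim0_le)
  show "\<forall>\<^sub>F N in sequentially. av (q ^ (p ^ N) - 1) \<le> (1 / real p) ^ N"
  proof (intro always_eventually allI)
    fix N
    have e: "q ^ (p ^ N) = p_exp av (of_nat (p ^ N) * Lg)"
      using exp_nat_mult[OF Lg_small, of "p ^ N"] exp_log by simp
    have "av (of_nat (p ^ N) :: 'a) = av ((of_nat p :: 'a) ^ N)" by simp
    also have "\<dots> = (1 / real p) ^ N" by (simp only: av_power av_of_p)
    finally have a: "av (of_nat (p ^ N) :: 'a) = (1 / real p) ^ N" .
    have "av (of_nat (p ^ N) * Lg) * sp = (1 / real p) ^ N * (av Lg * sp)"
      by (simp only: av_mult a mult.assoc)
    also have "\<dots> \<le> (1 / real p) ^ N * 1"
      using Lg_small by (intro mult_left_mono) auto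
    finally have b: "av (of_nat (p ^ N) * Lg) * sp \<le> (1 / real p) ^ N" by simp
    have "av (of_nat (p ^ N) * Lg) * sp < 1"
      by (rule small_mult[OF av_of_nat_le1])
    then show "av (q ^ (p ^ N) - 1) \<le> (1 / real p) ^ N"
      using exp_sub1_bound[of "of_nat (p ^ N) * Lg"] b e by simp
  qed
  show "(\<lambda>N. (1 / real p) ^ N) \<longlonglongrightarrow> 0"
    using p_gt1 by (intro LIMSEQ_realpow_zero) auto
qed (simp add: av_nonneg)

end

context cpq begin

lemma qpow_add:
  assumes x: "av x \<le> 1"
  shows "qpow av q (x + of_nat y) = p_exp av (x * Lg) * q ^ y"
proof -
  have "qpow av q (x + of_nat y) = p_exp av (x * Lg + of_nat y * Lg)"
    unfolding qpow_def by (simp add: distrib_right)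
  also have "\<dots> = p_exp av (x * Lg) * p_exp av (of_nat y * Lg)"
    by (rule exp_add[OF small_mult[OF x] small_mult[OF av_of_nat_le1]])
  also have "p_exp av (of_nat y * Lg) = q ^ y"
    using exp_nat_mult[OF Lg_small, of y] exp_log by simp
  finally show ?thesis .
qed

lemma qpow_xk:
  assumes x: "av x \<le> 1"
  shows "qpow av q (x * of_nat k) = p_exp av (x * Lg) ^ k"
proof -
  have "qpow av q (x * of_nat k) = p_exp av (of_nat k * (x * Lg))"
    unfolding qpow_def by (simp add: algebra_simps)
  also have "\<dots> = p_exp av (x * Lg) ^ k" by (rule exp_nat_mult[OF small_mult[OF x]])
  finally show ?thesis .
qed

lemma geo:
  assumes P: "odd P"
  shows "(\<Sum>y<P. (q ^ k) ^ y * (- q) ^ y) = (1 + (q ^ P) ^ (k + 1)) / (1 + q ^ (k + 1))"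
proof -
  have "(\<Sum>y<P. (q ^ k) ^ y * (- q) ^ y) = (\<Sum>y<P. (- (q ^ (k + 1))) ^ y)"
    by (simp add: power_mult_distrib[symmetric] algebra_simps)
  also have "\<dots> = (1 - (- (q ^ (k + 1))) ^ P) / (1 - (- (q ^ (k + 1))))"
  proof -
    have "- (q ^ (k + 1)) \<noteq> 1" using pow_ne_m1[of "k + 1"] by (metis minus_minus)
    then show ?thesis by (simp add: sum_gp_strict)
  qed
  also have "\<dots> = (1 + (q ^ (k + 1)) ^ P) / (1 + q ^ (k + 1))"
    using P by simp
  also have "(q ^ (k + 1)) ^ P = (q ^ P) ^ (k + 1)" by (metis power_mult mult.commute)
  finally show ?thesis .
qed

lemma closed_form:
  assumes x: "av x \<le> 1"
  shows "ferm_sum p q (\<lambda>y. qint av q (x + y) ^ n) N =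
    (1 + q) / (1 + q ^ (p ^ N)) * ((1 / (1 - q)) ^ n *
      (\<Sum>k\<le>n. of_nat (n choose k) * (-1) ^ k * p_exp av (x * Lg) ^ k *
         ((1 + (q ^ (p ^ N)) ^ (k + 1)) / (1 + q ^ (k + 1)))))"
proof -
  define w where "w = p_exp av (x * Lg)"
  define P where "P = p ^ N"
  define A where "A = (1 / (1 - q)) ^ n"
  define C where "C k = of_nat (n choose k) * (-1) ^ k * w ^ k" for k
  have oddP: "odd P" unfolding P_def using od by simp
  have g: "qint av q (x + of_nat y) ^ n = A * (\<Sum>k\<le>n. C k * (q ^ k) ^ y)" for y
  proof -
    have "qint av q (x + of_nat y) ^ n = ((- (w * q ^ y) + 1) * (1 / (1 - q))) ^ n"
      unfolding qint_def qpow_add[OF x] w_def by (simp add: divide_inverse)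
    also have "\<dots> = A * (- (w * q ^ y) + 1) ^ n" unfolding A_def power_mult_distrib by (rule mult.commute)
    also have "(- (w * q ^ y) + 1) ^ n = (\<Sum>k\<le>n. of_nat (n choose k) * (- (w * q ^ y)) ^ k * 1 ^ (n - k))"
      by (rule binomial_ring)
    also have "\<dots> = (\<Sum>k\<le>n. C k * (q ^ k) ^ y)"
    proof (rule sum.cong[OF refl])
      fix k
      have "(- (w * q ^ y)) ^ k = (-1) ^ k * w ^ k * (q ^ k) ^ y"
        by (simp add: power_minus[of "w * q ^ y"] power_mult_distrib mult.assoc
            flip: power_mult) (simp add: mult.commute)
      then show "of_nat (n choose k) * (- (w * q ^ y)) ^ k * 1 ^ (n - k) = C k * (q ^ k) ^ y"
        unfolding C_def by (simp add: mult.assoc)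
    qed
    finally show ?thesis .
  qed
  have "(\<Sum>y<P. qint av q (x + of_nat y) ^ n * (- q) ^ y)
      = (\<Sum>y<P. A * (\<Sum>k\<le>n. C k * (q ^ k) ^ y * (- q) ^ y))"
    unfolding g by (simp add: sum_distrib_right mult.assoc)
  also have "\<dots> = A * (\<Sum>y<P. \<Sum>k\<le>n. C k * ((q ^ k) ^ y * (- q) ^ y))"
    by (simp add: sum_distrib_left mult.assoc)
  also have "\<dots> = A * (\<Sum>k\<le>n. \<Sum>y<P. C k * ((q ^ k) ^ y * (- q) ^ y))"
    using sum.swap[of "\<lambda>y k. C k * ((q ^ k) ^ y * (- q) ^ y)" "{..n}" "{..<P}"] by simp
  also have "\<dots> = A * (\<Sum>k\<le>n. C k * ((1 + (q ^ P) ^ (k + 1)) / (1 + q ^ (k + 1))))"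
    by (simp add: sum_distrib_left[symmetric] geo[OF oddP])
  finally have s: "(\<Sum>y<P. qint av q (x + of_nat y) ^ n * (- q) ^ y) =
      A * (\<Sum>k\<le>n. C k * ((1 + (q ^ P) ^ (k + 1)) / (1 + q ^ (k + 1))))" .
  have "ferm_sum p q (\<lambda>y. qint av q (x + y) ^ n) N =
      (1 + q) / (1 + q ^ P) * (\<Sum>y<P. qint av q (x + of_nat y) ^ n * (- q) ^ y)"
    unfolding ferm_sum_def qint_neg_def P_def[symmetric] using oddP by simp
  also have "\<dots> = (1 + q) / (1 + q ^ P) * (A * (\<Sum>k\<le>n. C k * ((1 + (q ^ P) ^ (k + 1)) / (1 + q ^ (k + 1)))))"
    by (simp only: s)
  finally show ?thesis unfolding A_def C_def w_def P_def .
qed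

lemma main1:
  assumes x: "x \<in> Zp av" and q1: "q \<noteq> 1"
  shows "av_lim av (\<lambda>N. ferm_sum p q (\<lambda>y. (qint av q (x + y)) ^ n) N)
           (qint av q 2 * (1 / (1 - q)) ^ n *
             (\<Sum>k\<le>n. of_nat (n choose k) * (-1) ^ k * qpow av q (x * of_nat k) * (1 / (1 + q ^ (k + 1)))))"
proof -
  have x1: "av x \<le> 1" by (rule Zp_bound[OF x])
  define w where "w = p_exp av (x * Lg)"
  define A where "A = (1 / (1 - q)) ^ n"
  define C where "C k = of_nat (n choose k) * (-1) ^ k * w ^ k" for k
  define Q where "Q N = q ^ (p ^ N)" for N
  have QL: "av_lim av Q 1" unfolding Q_def by (rule QN_lim)
  have L: "av_lim av (\<lambda>N. (1 + q) / (1 + Q N) * (A * (\<Sum>k\<le>n. C k * ((1 + Q N ^ (k + 1)) / (1 + q ^ (k + 1))))))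
     ((1 + q) / (1 + 1) * (A * (\<Sum>k\<le>n. C k * ((1 + 1 ^ (k + 1)) / (1 + q ^ (k + 1))))))"
  proof (rule lim_mult)
    show "av_lim av (\<lambda>N. (1 + q) / (1 + Q N)) ((1 + q) / (1 + 1))"
      by (rule lim_divide[OF lim_const lim_add[OF lim_const QL]]) simp
    show "av_lim av (\<lambda>N. A * (\<Sum>k\<le>n. C k * ((1 + Q N ^ (k + 1)) / (1 + q ^ (k + 1)))))
        (A * (\<Sum>k\<le>n. C k * ((1 + 1 ^ (k + 1)) / (1 + q ^ (k + 1)))))"
    proof (rule lim_mult[OF lim_const])
      show "av_lim av (\<lambda>N. \<Sum>k\<le>n. C k * ((1 + Q N ^ (k + 1)) / (1 + q ^ (k + 1))))
          (\<Sum>k\<le>n. C k * ((1 + 1 ^ (k + 1)) / (1 + q ^ (k + 1))))"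
      proof (rule lim_sum)
        fix k
        show "av_lim av (\<lambda>N. C k * ((1 + Q N ^ (k + 1)) / (1 + q ^ (k + 1))))
            (C k * ((1 + 1 ^ (k + 1)) / (1 + q ^ (k + 1))))"
          by (rule lim_mult[OF lim_const lim_divide[OF lim_add[OF lim_const lim_power[OF QL]] lim_const]])
            (use pow_ne_m1[of "k + 1"] in \<open>metis add_eq_0_iff minus_minus\<close>)
      qed simp
    qed
  qed
  have fs: "ferm_sum p q (\<lambda>y. qint av q (x + y) ^ n) N =
      (1 + q) / (1 + Q N) * (A * (\<Sum>k\<le>n. C k * ((1 + Q N ^ (k + 1)) / (1 + q ^ (k + 1)))))" for N
    unfolding closed_form[OF x1] Q_def A_def C_def w_def ..
  have q2: "qint av q 2 = 1 + q"
  proof -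
    have "qpow av q 2 = q ^ 2" using qpow_nat[of 2] by simp
    then show ?thesis unfolding qint_def using q1
      by (simp add: power2_eq_square field_simps)
  qed
  have val: "(1 + q) / (1 + 1) * (A * (\<Sum>k\<le>n. C k * ((1 + 1 ^ (k + 1)) / (1 + q ^ (k + 1))))) =
     qint av q 2 * (1 / (1 - q)) ^ n *
       (\<Sum>k\<le>n. of_nat (n choose k) * (-1) ^ k * qpow av q (x * of_nat k) * (1 / (1 + q ^ (k + 1))))"
  proof -
    have "(\<Sum>k\<le>n. C k * ((1 + 1 ^ (k + 1)) / (1 + q ^ (k + 1)))) =
        2 * (\<Sum>k\<le>n. of_nat (n choose k) * (-1) ^ k * qpow av q (x * of_nat k) * (1 / (1 + q ^ (k + 1))))"
      unfolding sum_distrib_left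
      by (rule sum.cong[OF refl]) (simp add: C_def qpow_xk[OF x1] w_def)
    then show ?thesis unfolding q2 A_def by simp
  qed
  show ?thesis using L unfolding fs[symmetric] val .
qed

end

theorem mainTheorem1:
  fixes p :: nat and av :: "'a::field_char_0 \<Rightarrow> real" and q x :: 'a and n :: nat
  assumes "is_Cp p av" and "prime p" and "odd p"
    and "av (q - 1) < real p powr (- 1 / (real p - 1))" and "q \<noteq> 1"
    and "x \<in> Zp av"
  shows "av_lim av (\<lambda>N. ferm_sum p q (\<lambda>y. (qint av q (x + y)) ^ n) N)
           (qint av q 2 * (1 / (1 - q)) ^ n *
             (\<Sum>k\<le>n. of_nat (n choose k) * (-1) ^ k * qpow av q (x * of_nat k) * (1 / (1 + q ^ (k + 1)))))
       \<and> av_lim av (\<lambda>N. ferm_sum p q (\<lambda>y. (qint av q y) ^ n) N)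
           (qint av q 2 * (1 / (1 - q)) ^ n *
             (\<Sum>l\<le>n. of_nat (n choose l) * (-1) ^ l * (1 / (1 + q ^ (l + 1)))))"
proof -
  interpret cpx p av by unfold_locales (use assms in auto)
  have "real p powr (- 1 / (real p - 1)) = 1 / spw p"
    unfolding spw_def by (simp add: powr_minus_divide[symmetric] minus_divide_left[symmetric])
  then have qs: "av (q - 1) * spw p < 1"
    using assms(4) sp_gt1 by (simp add: pos_less_divide_eq)
  interpret cpq p av q by unfold_locales (use assms qs in auto)
  have h0: "qpow av q (0 * of_nat l) = 1" for l by (simp add: qpow_def exp_0)
  have A: "av_lim av (\<lambda>N. ferm_sum p q (\<lambda>y. (qint av q (x + y)) ^ n) N)
           (qint av q 2 * (1 / (1 - q)) ^ n *
             (\<Sum>k\<le>n. of_nat (n choose k) * (-1) ^ k * qpow av q (x * of_nat k) * (1 / (1 + q ^ (k + 1)))))"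
    by (rule main1[OF assms(6) assms(5)])
  have "av_lim av (\<lambda>N. ferm_sum p q (\<lambda>y. (qint av q (0 + y)) ^ n) N)
           (qint av q 2 * (1 / (1 - q)) ^ n *
             (\<Sum>k\<le>n. of_nat (n choose k) * (-1) ^ k * qpow av q (0 * of_nat k) * (1 / (1 + q ^ (k + 1)))))"
    by (rule main1[OF zero_Zp assms(5)])
  then have B: "av_lim av (\<lambda>N. ferm_sum p q (\<lambda>y. (qint av q y) ^ n) N)
           (qint av q 2 * (1 / (1 - q)) ^ n *
             (\<Sum>l\<le>n. of_nat (n choose l) * (-1) ^ l * (1 / (1 + q ^ (l + 1)))))"
    by (simp only: add_0_left h0 mult_1_right)
  show ?thesis using A B by blast
qed

end
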